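(* Let $\alpha$ be an ordinal and let $\mathcal{X}=\{X_a\}_{a\in J}$ be a family of metric spaces. Suppose that for every real $r>0$ each $X_a$ can be written as an $r$-disjoint union $X_a=\bigcup_i X_a^i$ (i.e. $\{X_a^i\}_i$ is $r$-disjoint) in such a way that the family $\{X_a^i\}_{i,a}$ belongs to $\mathfrak{C}_\alpha$. Then $\mathcal{X}\in\mathfrak{C}_{\alpha+1}$.
   Context: A family $\mathcal{U}$ of metric subspaces of a metric space $(X,d)$ is $r$-disjoint if $d(x,y)>r$ whenever $x\in U$, $y\in U'$, $U\neq U'$ in $\mathcal{U}$. For families $\mathcal{X},\mathcal{Y}$ and $R\in\mathbb{R}^{\mathbb{N}}$, $\mathcal{X}\xrightarrow{R}\mathcal{Y}$ means: there is an integer $k$ such that for each $X\in\mathcal{X}$ there are subcollections $\mathcal{U}_1,\dots,\mathcal{U}_k\subseteq\mathcal{Y}$ of subspaces of $X$, each $\mathcal{U}_i$ being $R_i$-disjoint, with $\bigcup_i\mathcal{U}_i$ covering $X$. A family is bounded if the diameters of its members are uniformly bounded. $\mathfrak{C}_0$ is the class of bounded families; for an ordinal $\alpha>0$, $\mathfrak{C}_\alpha$ is the class of families $\mathcal{X}$ such that for every $R\in\mathbb{R}^{\mathbb{N}}$ there exist $\beta<\alpha$ and $\mathcal{Y}\in\mathfrak{C}_\beta$ with $\mathcal{X}\xrightarrow{R}\mathcal{Y}$. All subspaces carry the induced metric. *)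

theory Defs
  imports "HOL-Analysis.Analysis"
begin

text \<open>A metric space is represented as a pair (carrier, distance function) over a point
  type 'p; a family of metric spaces is a set of such pairs.\<close>

type_synonym 'p mspace = "'p set \<times> ('p \<Rightarrow> 'p \<Rightarrow> real)"

definition r_disjoint :: "real \<Rightarrow> ('p \<Rightarrow> 'p \<Rightarrow> real) \<Rightarrow> 'p set set \<Rightarrow> bool" where
  "r_disjoint r d \<U> \<longleftrightarrow>
     (\<forall>U\<in>\<U>. \<forall>U'\<in>\<U>. U \<noteq> U' \<longrightarrow> (\<forall>x\<in>U. \<forall>y\<in>U'. d x y > r))"

definition is_subspace :: "'p mspace \<Rightarrow> 'p mspace \<Rightarrow> bool" where
  "is_subspace U X \<longleftrightarrow> fst U \<subseteq> fst X \<and>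
     (\<forall>x\<in>fst U. \<forall>y\<in>fst U. snd U x y = snd X x y)"

definition decomposes :: "(nat \<Rightarrow> real) \<Rightarrow> 'p mspace set \<Rightarrow> 'p mspace set \<Rightarrow> bool" where
  "decomposes R \<X> \<Y> \<longleftrightarrow> (\<exists>k::nat. \<forall>X\<in>\<X>. \<exists>\<U>::nat \<Rightarrow> 'p mspace set.
     (\<forall>i\<in>{1..k}. \<U> i \<subseteq> \<Y> \<and> (\<forall>U\<in>\<U> i. is_subspace U X) \<and>
        r_disjoint (R i) (snd X) (fst ` \<U> i)) \<and>
     fst X = (\<Union>i\<in>{1..k}. \<Union>U\<in>\<U> i. fst U))"

definition bounded_family :: "'p mspace set \<Rightarrow> bool" where
  "bounded_family \<X> \<longleftrightarrow> (\<exists>B::real. \<forall>X\<in>\<X>. \<forall>x\<in>fst X. \<forall>y\<in>fst X. snd X x y \<le> B)"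

text \<open>The classes C_alpha, indexed by elements of a well-ordered type (ordinals are
  modelled as initial segments of a well-order).  Defined as the least solution of the
  (well-founded) recursive definition, which is its unique solution.\<close>
inductive inC :: "'o::wellorder \<Rightarrow> 'p mspace set \<Rightarrow> bool" where
  zero: "(\<forall>\<beta>. \<not> \<beta> < \<alpha>) \<Longrightarrow> bounded_family \<X> \<Longrightarrow> inC \<alpha> \<X>"
| pos: "(\<exists>\<beta>. \<beta> < \<alpha>) \<Longrightarrow>
        (\<forall>R::nat \<Rightarrow> real. \<exists>\<beta><\<alpha>. \<exists>\<Y>. inC \<beta> \<Y> \<and> decomposes R \<X> \<Y>) \<Longrightarrow> inC \<alpha> \<X>"

end

theory Submission
  imports Defs
begin

theorem mainTheorem12:
  fixes \<alpha> \<alpha>' :: "'o::wellorder" and \<X> :: "'p mspace set"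
  assumes succ: "\<alpha> < \<alpha>'" "\<forall>\<gamma>. \<alpha> < \<gamma> \<longrightarrow> \<alpha>' \<le> \<gamma>"
    and metric: "\<forall>X\<in>\<X>. Metric_space (fst X) (snd X)"
    and hyp: "\<forall>r::real. r > 0 \<longrightarrow> (\<exists>D :: 'p mspace \<Rightarrow> 'p set set.
       (\<forall>X\<in>\<X>. (\<forall>U\<in>D X. U \<subseteq> fst X) \<and> \<Union>(D X) = fst X \<and> r_disjoint r (snd X) (D X)) \<and>
       inC \<alpha> {(U, snd X) | X U. X \<in> \<X> \<and> U \<in> D X})"
  shows "inC \<alpha>' \<X>"
proof (rule inC.pos)
  show "\<exists>\<beta>. \<beta> < \<alpha>'" using succ(1) by blast
  show "\<forall>R::nat \<Rightarrow> real. \<exists>\<beta><\<alpha>'. \<exists>\<Y>. inC \<beta> \<Y> \<and> decomposes R \<X> \<Y>"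
  proof
    fix R :: "nat \<Rightarrow> real"
    define r where "r = max (R 1) 1"
    have "r > 0" unfolding r_def by simp
    then obtain D :: "'p mspace \<Rightarrow> 'p set set" where
      D: "\<forall>X\<in>\<X>. (\<forall>U\<in>D X. U \<subseteq> fst X) \<and> \<Union>(D X) = fst X \<and> r_disjoint r (snd X) (D X)"
      and C: "inC \<alpha> {(U, snd X) | X U. X \<in> \<X> \<and> U \<in> D X}"
      using hyp[rule_format, OF \<open>r > 0\<close>] by (elim exE conjE)
    have "decomposes R \<X> {(U, snd X) | X U. X \<in> \<X> \<and> U \<in> D X}"
      unfolding decomposes_def
    proof (intro exI[of _ 1] ballI)
      fix X assume X: "X \<in> \<X>"
      define W where "W = (\<lambda>i::nat. (\<lambda>U. (U, snd X)) ` D X)"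
      have fW: "fst ` W i = D X" for i unfolding W_def by (simp add: image_image)
      have rdr: "r_disjoint r (snd X) (D X)" using D X by simp
      have rle: "R 1 \<le> r" unfolding r_def by simp
      have rd: "r_disjoint (R 1) (snd X) (D X)"
        unfolding r_disjoint_def
      proof (intro ballI impI)
        fix U U' x y assume "U \<in> D X" "U' \<in> D X" "U \<noteq> U'" "x \<in> U" "y \<in> U'"
        then have "snd X x y > r" using rdr unfolding r_disjoint_def by blast
        then show "snd X x y > R 1" using rle by linarith
      qed
      show "\<exists>\<U>::nat \<Rightarrow> 'p mspace set.
        (\<forall>i\<in>{1..1}. \<U> i \<subseteq> {(U, snd X) | X U. X \<in> \<X> \<and> U \<in> D X} \<and> (\<forall>U\<in>\<U> i. is_subspace U X) \<and>
          r_disjoint (R i) (snd X) (fst ` \<U> i)) \<and>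
        fst X = (\<Union>i\<in>{1..1}. \<Union>U\<in>\<U> i. fst U)"
      proof (intro exI[of _ W] conjI)
        show "\<forall>i\<in>{1..1}. W i \<subseteq> {(U, snd X) | X U. X \<in> \<X> \<and> U \<in> D X} \<and> (\<forall>U\<in>W i. is_subspace U X) \<and>
          r_disjoint (R i) (snd X) (fst ` W i)"
        proof
          fix i assume i: "i \<in> {1..(1::nat)}"
          then have i1: "i = 1" by simp
          have a: "W i \<subseteq> {(U, snd X) | X U. X \<in> \<X> \<and> U \<in> D X}"
            unfolding W_def using X by blast
          have b: "\<forall>U\<in>W i. is_subspace U X"
            unfolding W_def is_subspace_def using D X by auto
          have c: "r_disjoint (R i) (snd X) (fst ` W i)" using rd fW i1 by simp
          show "W i \<subseteq> {(U, snd X) | X U. X \<in> \<X> \<and> U \<in> D X} \<and> (\<forall>U\<in>W i. is_subspace U X) \<and>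
          r_disjoint (R i) (snd X) (fst ` W i)" using a b c by blast
        qed
      next
        have "(\<Union>i\<in>{1..(1::nat)}. \<Union>U\<in>W i. fst U) = \<Union>(D X)"
          unfolding W_def by auto
        then show "fst X = (\<Union>i\<in>{1..1}. \<Union>U\<in>W i. fst U)" using D X by simp
      qed
    qed
    then show "\<exists>\<beta><\<alpha>'. \<exists>\<Y>. inC \<beta> \<Y> \<and> decomposes R \<X> \<Y>"
      using C succ(1) by (intro exI[of _ \<alpha>] conjI impI exI[of _ "{(U, snd X) | X U. X \<in> \<X> \<and> U \<in> D X}"])
  qed
qed

end
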